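(* Let $p>0$, $m>0$, and let $N$ be a random variable on $\mathbb{N}_0$ with the arcsine probability mass function \[ f(n)=\mathbb{P}(N=n)=\nu(n)\,e^{n\theta(m)-\kappa(m)},\qquad \theta(m)=-\tfrac12\log\Big(1+\frac{p^2}{m^2}\Big),\quad \kappa(m)=p\arctan(m/p), \] where \[ \nu(2n)=\frac{1}{(2n)!}\prod_{i=0}^{n-1}\big((2i)^2+p^2\big),\qquad \nu(2n+1)=\frac{p}{(2n+1)!}\prod_{i=0}^{n-1}\big((2i+1)^2+p^2\big),\quad n\in\mathbb{N}_0 \] (empty products equal $1$). Let $b(n)=\frac{1}{\sqrt{n+1}}\big(\sqrt{1+\tfrac1n}-1\big)$ for $n\ge 1$, and define the probability mass function $b_2$ on $\{2,3,\dots\}$ by $b_2(2n)=b_2(2n+1)=\tfrac12 b(n)$ for $n\ge1$. Then there is a constant $C$ (not depending on $n$) such that \[ f(n\mid n\ge 2):=\mathbb{P}(N=n\mid N\ge 2)\le C\,b_2(n)\qquad\text{for all } n=2,3,\ldots. \]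
   Context: $b$ is the probability mass function of $\lfloor U^{-2}\rfloor$ for $U$ uniform on $(0,1)$, and $b_2$ is the law of $2Y$ or $2Y+1$ (each with probability $1/2$) with $Y\sim b$. The constant $C$ may depend on $p$ and $m$. *)

theory Defs
  imports "HOL-Analysis.Analysis"
begin

definition arcsine_nu :: "real \<Rightarrow> nat \<Rightarrow> real" where
  "arcsine_nu p n =
     (if even n then (\<Prod>i<n div 2. (2 * real i)^2 + p^2) / fact n
      else p * (\<Prod>i<n div 2. (2 * real i + 1)^2 + p^2) / fact n)"

definition arcsine_theta :: "real \<Rightarrow> real \<Rightarrow> real" where
  "arcsine_theta p m = - (1/2) * ln (1 + p^2 / m^2)"

definition arcsine_kappa :: "real \<Rightarrow> real \<Rightarrow> real" where
  "arcsine_kappa p m = p * arctan (m / p)"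

definition arcsine_pmf :: "real \<Rightarrow> real \<Rightarrow> nat \<Rightarrow> real" where
  "arcsine_pmf p m n =
     arcsine_nu p n * exp (real n * arcsine_theta p m - arcsine_kappa p m)"

definition arcsine_cond_pmf :: "real \<Rightarrow> real \<Rightarrow> nat \<Rightarrow> real" where
  "arcsine_cond_pmf p m n =
     arcsine_pmf p m n / (\<Sum>\<^sub>\<infinity>k\<in>{2..}. arcsine_pmf p m k)"

text \<open>b(n) = (sqrt(1 + 1/n) - 1)/sqrt(n+1) for n >= 1 (law of floor(U^-2)).\<close>
definition bpmf :: "nat \<Rightarrow> real" where
  "bpmf n = (if n \<ge> 1 then (sqrt (1 + 1 / real n) - 1) / sqrt (real n + 1) else 0)"

definition b2pmf :: "nat \<Rightarrow> real" where
  "b2pmf n = bpmf (n div 2) / 2"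

end

theory Submission
  imports Defs
begin

lemma aux_div: "(a::real) * b / (c * d * f) = a / f * b / (d * c)"
  by (simp add: mult.commute mult.left_commute)

lemma even_half: "even n \<Longrightarrow> 2 * real (n div 2) = real n"
  by (elim evenE) simp

lemma odd_half: "odd n \<Longrightarrow> 2 * real (n div 2) + 1 = real n"
  by (elim oddE) simp

lemma nu_step_even:
  assumes True: "even n" and d: "(n+2) div 2 = Suc (n div 2)"
    and f: "fact (n+2) = (real n + 2) * (real n + 1) * (fact n :: real)"
    and e: "2 * real (n div 2) = real n" and ev: "even (n+2)"
  shows "arcsine_nu p (n+2) = (\<Prod>i<n div 2. (2 * real i)^2 + p^2) * ((real n)^2 + p^2)
             / ((real n + 2) * (real n + 1) * fact n)"
  unfolding arcsine_nu_def d prod.lessThan_Suc f e using ev by simp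

lemma nu_step_even2:
  assumes True: "even n"
  shows "(\<Prod>i<n div 2. (2 * real i)^2 + p^2) * ((real n)^2 + p^2)
             / ((real n + 2) * (real n + 1) * fact n) = arcsine_nu p n * ((real n)^2 + p^2) / ((real n + 1)*(real n + 2))"
  unfolding aux_div arcsine_nu_def using True by simp

lemma nu_step_odd:
  assumes False: "odd n" and d: "(n+2) div 2 = Suc (n div 2)"
    and f: "fact (n+2) = (real n + 2) * (real n + 1) * (fact n :: real)"
    and e: "2 * real (n div 2) + 1 = real n" and od: "odd (n+2)"
  shows "arcsine_nu p (n+2) = (p * (\<Prod>i<n div 2. (2 * real i + 1)^2 + p^2)) * ((real n)^2 + p^2)
             / ((real n + 2) * (real n + 1) * fact n)"
  unfolding arcsine_nu_def d prod.lessThan_Suc f e using od by (simp add: mult.assoc)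

lemma nu_step_odd2:
  assumes False: "odd n"
  shows "(p * (\<Prod>i<n div 2. (2 * real i + 1)^2 + p^2)) * ((real n)^2 + p^2)
             / ((real n + 2) * (real n + 1) * fact n) = arcsine_nu p n * ((real n)^2 + p^2) / ((real n + 1)*(real n + 2))"
  unfolding aux_div arcsine_nu_def using False by simp

lemma fact_plus2: "fact (n+2) = (real n + 2) * (real n + 1) * (fact n :: real)"
  by (simp add: fact_Suc numeral_2_eq_2 algebra_simps)

lemma nu_rec:
  "arcsine_nu p (n+2) = arcsine_nu p n * ((real n)^2 + p^2) / ((real n + 1)*(real n + 2))"
proof (cases "even n")
  case True
  have d: "(n+2) div 2 = Suc (n div 2)" by simp
  have ev: "even (n+2)" using True by simp
  show ?thesis
    by (rule trans[OF nu_step_even[OF True d fact_plus2 even_half[OF True] ev] nu_step_even2[OF True]])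
next
  case False
  have d: "(n+2) div 2 = Suc (n div 2)" by simp
  have od: "odd (n+2)" using False by simp
  show ?thesis
    by (rule trans[OF nu_step_odd[OF False d fact_plus2 odd_half[OF False] od] nu_step_odd2[OF False]])
qed

lemma nu_nonneg: "p > 0 \<Longrightarrow> arcsine_nu p n \<ge> 0"
  unfolding arcsine_nu_def by (auto intro!: prod_nonneg divide_nonneg_nonneg mult_nonneg_nonneg)

lemma bounded_step:
  fixes g :: "nat \<Rightarrow> real"
  assumes "\<forall>n\<ge>N. g (n+2) \<le> g n"
  shows "\<exists>M. \<forall>n. g n \<le> M"
proof -
  define M where "M = Max (g ` {..N+1})"
  have "g n \<le> M" for n
  proof (induction n rule: less_induct)
    case (less n)
    show ?case
    proof (cases "n \<le> N+1")
      case True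
      then show ?thesis unfolding M_def by (intro Max_ge) auto
    next
      case False
      then obtain k where k: "n = k + 2" "k \<ge> N" 
        by (intro that[of "n - 2"]) auto
      then have "g n \<le> g k" using assms by auto
      also have "g k \<le> M" using less k by auto
      finally show ?thesis .
    qed
  qed
  then show ?thesis by blast
qed

lemma b2_lower:
  assumes "n \<ge> 2"
  shows "b2pmf n \<ge> 1 / (6 * (real n + 2)^2)"
proof -
  define k where "k = n div 2"
  have k1: "k \<ge> 1" using assms unfolding k_def by auto
  have kn: "real k \<le> real n" unfolding k_def by simp
  have kpos: "real k > 0" using k1 by simp
  have s2: "sqrt (1 + 1 / real k) \<le> 2"
  proof -
    have "1 + 1 / real k \<le> 4" using k1 by (simp add: field_simps)
    then have "sqrt (1 + 1 / real k) \<le> sqrt 4" by (rule real_sqrt_le_mono)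
    then show ?thesis by simp
  qed
  have s1: "sqrt (1 + 1 / real k) \<ge> 1" using kpos by simp
  then have "0 < 3 * sqrt (1 + 1 / real k) + 3" by linarith
  have "sqrt (1 + 1 / real k) - 1 = (1 / real k) / (sqrt (1 + 1 / real k) + 1)"
  proof -
    define s where "s = sqrt (1 + 1 / real k)"
    have "s^2 = 1 + 1 / real k" unfolding s_def using kpos by simp
    then have e2: "(s - 1) * (s + 1) = 1 / real k" by (simp add: algebra_simps power2_eq_square)
    have sp: "s + 1 > 0" using s1 s_def by linarith
    have e1: "s - 1 = ((s - 1) * (s + 1)) / (s + 1)"
      using sp by (metis less_irrefl nonzero_mult_div_cancel_right)
    have "s - 1 = (1 / real k) / (s + 1)" using e1 unfolding e2 .
    then show ?thesis unfolding s_def[symmetric] .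
  qed
  also have "\<dots> \<ge> (1 / real k) / 3"
    using s1 s2 kpos \<open>0 < 3 * sqrt (1 + 1 / real k) + 3\<close> by (intro divide_left_mono) auto
  finally have A: "sqrt (1 + 1 / real k) - 1 \<ge> 1 / (3 * real k)" by simp
  have B: "sqrt (real k + 1) \<le> real k + 1"
  proof -
    have "sqrt (real k + 1) \<le> sqrt ((real k + 1)^2)"
      using k1 by (intro real_sqrt_le_mono) (simp add: power2_eq_square)
    then show ?thesis by simp
  qed
  have Bp: "sqrt (real k + 1) > 0" by simp
  have "1 / (3 * real k * (real k + 1)) \<le> (sqrt (1 + 1 / real k) - 1) / sqrt (real k + 1)"
  proof -
    have "1 / (3 * real k * (real k + 1)) = (1 / (3 * real k)) / (real k + 1)" by simp
    also have "\<dots> \<le> (1 / (3 * real k)) / sqrt (real k + 1)"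
      using B Bp kpos by (intro divide_left_mono) auto
    also have "\<dots> \<le> (sqrt (1 + 1 / real k) - 1) / sqrt (real k + 1)"
      using A Bp by (intro divide_right_mono) auto
    finally show ?thesis .
  qed
  moreover have "1 / (3 * (real n + 2)^2) \<le> 1 / (3 * real k * (real k + 1))"
  proof -
    have "real k * (real k + 1) \<le> (real n + 2) * (real n + 2)"
      by (rule mult_mono) (use kn in auto)
    then have le: "3 * real k * (real k + 1) \<le> 3 * (real n + 2)^2" by (simp add: power2_eq_square)
    have "0 < 3 * real k * (real k + 1)" using kpos by simp
    then show ?thesis using le by (intro divide_left_mono) auto
  qed
  ultimately have "1 / (3 * (real n + 2)^2) \<le> bpmf k"
    unfolding bpmf_def using k1 by auto
  then show ?thesis unfolding b2pmf_def k_def[symmetric] by simp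
qed

lemma ev_ineq:
  fixes q p :: real
  assumes q0: "0 < q" and q1: "q < 1" and p0: "p > 0"
  shows "\<exists>N. \<forall>n\<ge>N. q^2 * (((real n)^2+p^2)*(real n+4)^2) \<le> (real n+1)*(real n+2)^3"
proof -
  define r where "r = sqrt q"
  have r0: "r \<ge> 0" unfolding r_def using q0 by simp
  have r1: "r < 1" unfolding r_def using q0 q1 by simp
  have r2: "r^2 = q" unfolding r_def using q0 by simp
  have r4: "r^4 = q^2" using r2 by (metis power_mult numeral_Bit0 mult_2_right power_add)
  define A where "A = max p 4"
  have A0: "A > 0" "p \<le> A" "4 \<le> A" unfolding A_def by auto
  define N where "N = nat \<lceil>A / (1 - r)\<rceil>"
  have "\<forall>n\<ge>N. q^2 * (((real n)^2+p^2)*(real n+4)^2) \<le> (real n+1)*(real n+2)^3"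
  proof (intro allI impI)
    fix n assume nN: "n \<ge> N"
    have "A / (1 - r) \<le> real N" unfolding N_def by linarith
    also have "\<dots> \<le> real n" using nN by simp
    finally have "A / (1 - r) \<le> real n" .
    then have h1: "A \<le> real n * (1 - r)" using r1 by (simp add: pos_divide_le_eq)
    have h2: "r * A \<le> 1 * A" using r1 A0 by (intro mult_right_mono) auto
    have h3: "r * (real n + A) \<le> real n + 1" using h1 h2 by (simp add: algebra_simps)
    have h4: "0 \<le> r * (real n + A)" using r0 A0 by simp
    have P1: "(r * (real n + A))^4 \<le> (real n + 1)^4" by (rule power_mono[OF h3 h4])
    have "p^2 \<le> A^2" using A0 p0 by (intro power_mono) auto
    moreover have "0 \<le> 2 * real n * A" using A0 by simp
    ultimately have E1: "(real n)^2 + p^2 \<le> (real n + A)^2" by (simp add: power2_eq_square algebra_simps)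
    have E2: "(real n + 4)^2 \<le> (real n + A)^2" using A0 by (intro power_mono) auto
    have "((real n)^2+p^2)*(real n+4)^2 \<le> (real n + A)^2 * (real n + A)^2"
      using E1 E2 by (intro mult_mono) auto
    then have "q^2 * (((real n)^2+p^2)*(real n+4)^2) \<le> q^2 * ((real n + A)^2 * (real n + A)^2)"
      by (intro mult_left_mono) auto
    also have "\<dots> = (r * (real n + A))^4" unfolding r4[symmetric] by (simp add: power_mult_distrib power2_eq_square power4_eq_xxxx)
    also have "\<dots> \<le> (real n + 1)^4" by (rule P1)
    also have "\<dots> = (real n + 1) * (real n + 1)^3" by (simp add: power4_eq_xxxx power3_eq_cube)
    also have "\<dots> \<le> (real n + 1) * (real n + 2)^3" by (intro mult_left_mono power_mono) auto
    finally show "q^2 * (((real n)^2+p^2)*(real n+4)^2) \<le> (real n+1)*(real n+2)^3" .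
  qed
  then show ?thesis by blast
qed

theorem mainTheorem4:
  fixes p m :: real
  assumes "p > 0" and "m > 0"
  shows "\<exists>C. \<forall>n::nat. n \<ge> 2 \<longrightarrow> arcsine_cond_pmf p m n \<le> C * b2pmf n"
proof -
  define q where "q = exp (arcsine_theta p m)"
  have qpos: "q > 0" unfolding q_def by simp
  have "arcsine_theta p m < 0"
    unfolding arcsine_theta_def using assms by (simp add: ln_gt_zero)
  then have q1: "q < 1" unfolding q_def by simp
  then have qq: "q^2 < 1" using qpos by (simp add: power_less_one_iff)
  obtain N where N: "\<And>n. n \<ge> N \<Longrightarrow> q^2 * (((real n)^2+p^2)*(real n+4)^2) \<le> (real n+1)*(real n+2)^3"
    using ev_ineq[OF qpos q1 assms(1)] by blast
  define g where "g n = arcsine_nu p n * q^n * (real n + 2)^2" for n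
  have step: "\<forall>n\<ge>N. g (n+2) \<le> g n"
  proof (intro allI impI)
    fix n assume "n \<ge> N"
    from N[OF this] have ineq: "q^2 * (((real n)^2+p^2)*(real n+4)^2) \<le> (real n+1)*(real n+2)^3" .
    have nn: "arcsine_nu p n * q^n \<ge> 0" using nu_nonneg[OF assms(1)] qpos by simp
    have "g (n+2) = (arcsine_nu p n * q^n) * (q^2 * (((real n)^2+p^2)*(real n+4)^2)) / ((real n + 1)*(real n + 2))"
      unfolding g_def nu_rec by (simp add: power_add power2_eq_square field_simps)
    also have "\<dots> \<le> (arcsine_nu p n * q^n) * ((real n+1)*(real n+2)^3) / ((real n + 1)*(real n + 2))"
      by (intro divide_right_mono mult_left_mono ineq nn) auto
    also have "\<dots> = g n"
    proof -
      have "(real n+1)*(real n+2)^3 = ((real n + 1)*(real n + 2)) * (real n+2)^2"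
        by (simp add: power2_eq_square power3_eq_cube)
      moreover have "(real n + 1)*(real n + 2) > 0" by simp
      ultimately show ?thesis unfolding g_def by simp
    qed
    finally show "g (n+2) \<le> g n" .
  qed
  obtain M where M: "\<And>n. g n \<le> M" using bounded_step[OF step] by blast
  have M0: "M \<ge> 0" using M[of 0] nu_nonneg[OF assms(1), of 0] qpos unfolding g_def by (smt (verit) mult_nonneg_nonneg zero_le_power zero_le_power2)
  define K where "K = exp (- arcsine_kappa p m)"
  have Kp: "K > 0" unfolding K_def by simp
  have fb: "arcsine_pmf p m n \<le> (6 * M * K) * b2pmf n" if "n \<ge> 2" for n
  proof -
    have e: "exp (real n * arcsine_theta p m - arcsine_kappa p m) = q^n * K"
      unfolding q_def K_def by (simp add: exp_diff exp_of_nat_mult[symmetric] exp_minus field_simps)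
    have "arcsine_pmf p m n = g n / (real n + 2)^2 * K"
      unfolding arcsine_pmf_def e g_def by simp
    also have "\<dots> \<le> M / (real n + 2)^2 * K"
      using M[of n] Kp by (intro mult_right_mono divide_right_mono) auto
    also have "\<dots> = (6 * M * K) * (1 / (6 * (real n + 2)^2))" by simp
    also have "\<dots> \<le> (6 * M * K) * b2pmf n"
      using b2_lower[OF that] M0 Kp by (intro mult_left_mono) auto
    finally show ?thesis .
  qed
  define S where "S = (\<Sum>\<^sub>\<infinity>k\<in>{2..}. arcsine_pmf p m k)"
  have fnn: "arcsine_pmf p m n \<ge> 0" for n
    unfolding arcsine_pmf_def using nu_nonneg[OF assms(1)] by simp
  show ?thesis
  proof (cases "S > 0")
    case True
    show ?thesis
    proof (intro exI[of _ "6 * M * K / S"] allI impI)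
      fix n :: nat assume "n \<ge> 2"
      then have "arcsine_pmf p m n / S \<le> (6 * M * K) * b2pmf n / S"
        using fb True by (intro divide_right_mono) auto
      then show "arcsine_cond_pmf p m n \<le> 6 * M * K / S * b2pmf n"
        unfolding arcsine_cond_pmf_def S_def[symmetric] by simp
    qed
  next
    case False
    show ?thesis
    proof (intro exI[of _ 0] allI impI)
      fix n :: nat
      have "arcsine_pmf p m n / S \<le> 0" using False fnn[of n]
        by (simp add: divide_nonneg_nonpos)
      then show "arcsine_cond_pmf p m n \<le> 0 * b2pmf n"
        unfolding arcsine_cond_pmf_def S_def[symmetric] by simp
    qed
  qed
qed

end
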